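(* Let $M=(Q,\Sigma,\Delta,Q_\alpha,F)$ be a simple NFA and let $M_\circlearrowleft=(Q,\Sigma,\Delta_\circlearrowleft,Q_\alpha,F)$, where $\Delta_\circlearrowleft(q,\sigma)=\{q\}\cup\Delta(q,\sigma)$ if $q\in Q_\alpha$ and $\Delta_\circlearrowleft(q,\sigma)=\Delta(q,\sigma)$ otherwise. Then $M_\circlearrowleft$ is simple if and only if there do not exist $\sigma\in\Sigma$, $q_\alpha\in Q_\alpha$ and $q\in Q$ with $q\neq q_\alpha$ such that $q_\alpha\in\Delta(q,\sigma)$.
   Context: An NFA is a tuple $M=(Q,\Sigma,\Delta,Q_\alpha,F)$ where $Q$ is a finite set of states, $\Sigma$ a finite alphabet, $\Delta:Q\times\Sigma\to\mathcal{P}(Q)$ the transition function, $Q_\alpha\subseteq Q$ the set of start states and $F\subseteq Q$ the set of accepting states. $\Delta$ is extended to strings by $\hat\Delta(q,\varepsilon)=\{q\}$ and $\hat\Delta(q,\sigma s)=\bigcup_{p\in\Delta(q,\sigma)}\hat\Delta(p,s)$. The language of a state $q$ is $\mathcal{L}(q)=\{s\in\Sigma^*:\hat\Delta(q,s)\cap F\neq\emptyset\}$ (computed with respect to the transition function of the automaton under consideration). A state $q$ is accessible if $q\in\hat\Delta(q_\alpha,s)$ for some $q_\alpha\in Q_\alpha$, $s\in\Sigma^*$. An NFA is called simple if all its states are accessible and the languages $\mathcal{L}(q)$, $q\in Q$, are non-empty and pairwise disjoint. *)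

theory Defs
  imports Main
begin

definition nfa :: "'q set \<Rightarrow> 'a set \<Rightarrow> ('q \<Rightarrow> 'a \<Rightarrow> 'q set) \<Rightarrow> 'q set \<Rightarrow> 'q set \<Rightarrow> bool" where
  "nfa Q \<Sigma> \<Delta> Qa F \<longleftrightarrow> finite Q \<and> finite \<Sigma> \<and> Qa \<subseteq> Q \<and> F \<subseteq> Q \<and>
     (\<forall>q\<in>Q. \<forall>\<sigma>\<in>\<Sigma>. \<Delta> q \<sigma> \<subseteq> Q)"

fun ext_delta :: "('q \<Rightarrow> 'a \<Rightarrow> 'q set) \<Rightarrow> 'q \<Rightarrow> 'a list \<Rightarrow> 'q set" where
  "ext_delta \<Delta> q [] = {q}"
| "ext_delta \<Delta> q (\<sigma> # s) = (\<Union>p\<in>\<Delta> q \<sigma>. ext_delta \<Delta> p s)"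

definition lang :: "'a set \<Rightarrow> ('q \<Rightarrow> 'a \<Rightarrow> 'q set) \<Rightarrow> 'q set \<Rightarrow> 'q \<Rightarrow> 'a list set" where
  "lang \<Sigma> \<Delta> F q = {s. set s \<subseteq> \<Sigma> \<and> ext_delta \<Delta> q s \<inter> F \<noteq> {}}"

definition accessible :: "'a set \<Rightarrow> ('q \<Rightarrow> 'a \<Rightarrow> 'q set) \<Rightarrow> 'q set \<Rightarrow> 'q \<Rightarrow> bool" where
  "accessible \<Sigma> \<Delta> Qa q \<longleftrightarrow> (\<exists>qa\<in>Qa. \<exists>s. set s \<subseteq> \<Sigma> \<and> q \<in> ext_delta \<Delta> qa s)"

definition simple_nfa :: "'q set \<Rightarrow> 'a set \<Rightarrow> ('q \<Rightarrow> 'a \<Rightarrow> 'q set) \<Rightarrow> 'q set \<Rightarrow> 'q set \<Rightarrow> bool" where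
  "simple_nfa Q \<Sigma> \<Delta> Qa F \<longleftrightarrow>
     (\<forall>q\<in>Q. accessible \<Sigma> \<Delta> Qa q) \<and>
     (\<forall>q\<in>Q. lang \<Sigma> \<Delta> F q \<noteq> {}) \<and>
     (\<forall>q\<in>Q. \<forall>p\<in>Q. q \<noteq> p \<longrightarrow> lang \<Sigma> \<Delta> F q \<inter> lang \<Sigma> \<Delta> F p = {})"

definition loop_delta :: "('q \<Rightarrow> 'a \<Rightarrow> 'q set) \<Rightarrow> 'q set \<Rightarrow> 'q \<Rightarrow> 'a \<Rightarrow> 'q set" where
  "loop_delta \<Delta> Qa q \<sigma> = (if q \<in> Qa then {q} \<union> \<Delta> q \<sigma> else \<Delta> q \<sigma>)"

end

theory Submission
  imports Defs
begin

lemma ext_mono: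
  assumes "\<And>q \<sigma>. \<Delta> q \<sigma> \<subseteq> \<Delta>' q \<sigma>"
  shows "ext_delta \<Delta> q s \<subseteq> ext_delta \<Delta>' q s"
  using assms by (induction s arbitrary: q) fastforce+

lemma loop_sup: "\<Delta> q \<sigma> \<subseteq> loop_delta \<Delta> Qa q \<sigma>"
  by (auto simp: loop_delta_def)

lemma nfa_step: "nfa Q \<Sigma> \<Delta> Qa F \<Longrightarrow> q \<in> Q \<Longrightarrow> a \<in> \<Sigma> \<Longrightarrow> p \<in> \<Delta> q a \<Longrightarrow> p \<in> Q"
  unfolding nfa_def by blast

lemma ext_loop: "ext_delta \<Delta> q s \<subseteq> ext_delta (loop_delta \<Delta> Qa) q s"
  by (rule ext_mono[OF loop_sup])

lemma ext_append: "ext_delta \<Delta> q (w @ v) = (\<Union>r\<in>ext_delta \<Delta> q w. ext_delta \<Delta> r v)"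
  by (induction w arbitrary: q) auto

lemma ext_in_Q:
  assumes "nfa Q \<Sigma> \<Delta> Qa F" "q \<in> Q" "set s \<subseteq> \<Sigma>" "r \<in> ext_delta \<Delta> q s"
  shows "r \<in> Q"
  using assms(2-4)
proof (induction s arbitrary: q)
  case Nil then show ?case by simp
next
  case (Cons a s)
  then obtain p where p: "p \<in> \<Delta> q a" "r \<in> ext_delta \<Delta> p s" by auto
  have "p \<in> Q" using nfa_step[OF assms(1) Cons.prems(1) _ p(1)] Cons.prems(2) by simp
  then show ?case using Cons.IH[OF _ _ p(2)] Cons.prems(2) by simp
qed

lemma into_start:
  assumes "nfa Q \<Sigma> \<Delta> Qa F"
    and noin: "\<not> (\<exists>\<sigma>\<in>\<Sigma>. \<exists>qa\<in>Qa. \<exists>q\<in>Q. q \<noteq> qa \<and> qa \<in> \<Delta> q \<sigma>)"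
    and "p \<in> Qa" "q \<in> Q" "set w \<subseteq> \<Sigma>" "p \<in> ext_delta \<Delta> q w"
  shows "p = q"
  using assms(4-6)
proof (induction w arbitrary: q)
  case Nil then show ?case by simp
next
  case (Cons a w)
  then obtain q' where q': "q' \<in> \<Delta> q a" "p \<in> ext_delta \<Delta> q' w" by auto
  have "q' \<in> Q" using nfa_step[OF assms(1) Cons.prems(1) _ q'(1)] Cons.prems(2) by simp
  then have "p = q'" using Cons.IH[OF _ _ q'(2)] Cons.prems(2) by simp
  then show ?case using noin q'(1) Cons.prems(1,2) assms(3) by (metis list.set_intros(1) subsetD)
qed

lemma loop_decomp:
  assumes "nfa Q \<Sigma> \<Delta> Qa F"
    and noin: "\<not> (\<exists>\<sigma>\<in>\<Sigma>. \<exists>qa\<in>Qa. \<exists>q\<in>Q. q \<noteq> qa \<and> qa \<in> \<Delta> q \<sigma>)"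
    and "q \<in> Q" "set s \<subseteq> \<Sigma>" "r \<in> ext_delta (loop_delta \<Delta> Qa) q s"
  shows "\<exists>u v. s = u @ v \<and> r \<in> ext_delta \<Delta> q v \<and> (u = [] \<or> q \<in> Qa)"
  using assms(3-5)
proof (induction s arbitrary: q)
  case Nil then show ?case by simp
next
  case (Cons a s)
  then obtain p where p: "p \<in> loop_delta \<Delta> Qa q a" "r \<in> ext_delta (loop_delta \<Delta> Qa) p s" by auto
  show ?case
  proof (cases "p \<in> \<Delta> q a")
    case True
    have "p \<in> Q" using nfa_step[OF assms(1) Cons.prems(1) _ True] Cons.prems(2) by simp
    then obtain u v where uv: "s = u @ v" "r \<in> ext_delta \<Delta> p v" "u = [] \<or> p \<in> Qa"
      using Cons.IH[OF _ _ p(2)] Cons.prems(2) by auto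
    show ?thesis
    proof (cases "u = []")
      case True
      then show ?thesis using uv \<open>p \<in> \<Delta> q a\<close>
        by (intro exI[of _ "[]"] exI[of _ "a # v"]) auto
    next
      case False
      then have "p \<in> Qa" using uv by auto
      then have "p = q" using noin \<open>p \<in> \<Delta> q a\<close> Cons.prems(1,2) by (metis list.set_intros(1) subsetD)
      then show ?thesis using uv \<open>p \<in> Qa\<close>
        by (intro exI[of _ "a # u"] exI[of _ v]) auto
    qed
  next
    case False
    then have "p = q" "q \<in> Qa" using p(1) by (auto simp: loop_delta_def split: if_splits)
    then obtain u v where uv: "s = u @ v" "r \<in> ext_delta \<Delta> q v"
      using Cons.IH[OF _ _ p(2)] Cons.prems(1,2) by auto
    then show ?thesis using \<open>q \<in> Qa\<close>
      by (intro exI[of _ "a # u"] exI[of _ v]) auto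
  qed
qed

theorem mainTheorem2:
  fixes Q :: "'q set" and \<Sigma> :: "'a set" and \<Delta> :: "'q \<Rightarrow> 'a \<Rightarrow> 'q set"
    and Qa F :: "'q set"
  assumes "nfa Q \<Sigma> \<Delta> Qa F"
    and "simple_nfa Q \<Sigma> \<Delta> Qa F"
  shows "simple_nfa Q \<Sigma> (loop_delta \<Delta> Qa) Qa F \<longleftrightarrow>
         \<not> (\<exists>\<sigma>\<in>\<Sigma>. \<exists>qa\<in>Qa. \<exists>q\<in>Q. q \<noteq> qa \<and> qa \<in> \<Delta> q \<sigma>)"
proof
  assume S: "simple_nfa Q \<Sigma> (loop_delta \<Delta> Qa) Qa F"
  show "\<not> (\<exists>\<sigma>\<in>\<Sigma>. \<exists>qa\<in>Qa. \<exists>q\<in>Q. q \<noteq> qa \<and> qa \<in> \<Delta> q \<sigma>)"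
  proof
    assume "\<exists>\<sigma>\<in>\<Sigma>. \<exists>qa\<in>Qa. \<exists>q\<in>Q. q \<noteq> qa \<and> qa \<in> \<Delta> q \<sigma>"
    then obtain \<sigma> qa q where h: "\<sigma> \<in> \<Sigma>" "qa \<in> Qa" "q \<in> Q" "q \<noteq> qa" "qa \<in> \<Delta> q \<sigma>" by blast
    have qaQ: "qa \<in> Q" using assms(1) h(2) unfolding nfa_def by blast
    then obtain v where v: "v \<in> lang \<Sigma> \<Delta> F qa" using assms(2) unfolding simple_nfa_def by blast
    have vl: "v \<in> lang \<Sigma> (loop_delta \<Delta> Qa) F qa"
      using v ext_loop[of \<Delta> qa v Qa] unfolding lang_def by blast
    have "\<sigma> # v \<in> lang \<Sigma> (loop_delta \<Delta> Qa) F q"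
      using vl h loop_sup[of \<Delta> q \<sigma> Qa] unfolding lang_def by auto
    moreover have "\<sigma> # v \<in> lang \<Sigma> (loop_delta \<Delta> Qa) F qa"
      using vl h unfolding lang_def by (auto simp: loop_delta_def)
    ultimately show False using S h qaQ unfolding simple_nfa_def by blast
  qed
next
  assume noin: "\<not> (\<exists>\<sigma>\<in>\<Sigma>. \<exists>qa\<in>Qa. \<exists>q\<in>Q. q \<noteq> qa \<and> qa \<in> \<Delta> q \<sigma>)"
  have uniq: "r = p" if "r \<in> Q" "p \<in> Q" "x \<in> lang \<Sigma> \<Delta> F r" "x \<in> lang \<Sigma> \<Delta> F p" for r p x
  proof (rule ccontr)
    assume "r \<noteq> p"
    then have "lang \<Sigma> \<Delta> F r \<inter> lang \<Sigma> \<Delta> F p = {}"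
      using assms(2) that(1,2) unfolding simple_nfa_def by blast
    then show False using that(3,4) by blast
  qed
  have dec: "\<exists>u v. x = u @ v \<and> v \<in> lang \<Sigma> \<Delta> F q \<and> (u = [] \<or> q \<in> Qa)"
    if qQ: "q \<in> Q" and xl: "x \<in> lang \<Sigma> (loop_delta \<Delta> Qa) F q" for q x
  proof -
    from xl obtain f where f: "set x \<subseteq> \<Sigma>" "f \<in> F" "f \<in> ext_delta (loop_delta \<Delta> Qa) q x"
      unfolding lang_def by blast
    then obtain u v where "x = u @ v" "f \<in> ext_delta \<Delta> q v" "u = [] \<or> q \<in> Qa"
      using loop_decomp[OF assms(1) noin qQ f(1) f(3)] by blast
    then show ?thesis using f unfolding lang_def by auto
  qed
  have key: "q = p" if "q \<in> Q" "p \<in> Q" "x = u1 @ v1" "x = u2 @ v2"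
    "v1 \<in> lang \<Sigma> \<Delta> F q" "v2 \<in> lang \<Sigma> \<Delta> F p" "u2 = [] \<or> p \<in> Qa"
    "length u1 \<le> length u2" for q p x u1 u2 v1 v2
  proof -
    define w where "w = drop (length u1) u2"
    have "u1 @ v1 = u2 @ v2" using that(3,4) by simp
    then have vw: "v1 = w @ v2" using append_eq_append_conv_if[of u1 v1 u2 v2] that(8) unfolding w_def
      by simp
    from that(5) obtain f where f: "set v1 \<subseteq> \<Sigma>" "f \<in> F" "f \<in> ext_delta \<Delta> q (w @ v2)"
      unfolding lang_def vw by blast
    then obtain r where r: "r \<in> ext_delta \<Delta> q w" "f \<in> ext_delta \<Delta> r v2"
      unfolding ext_append by blast
    have sw: "set w \<subseteq> \<Sigma>" "set v2 \<subseteq> \<Sigma>" using f(1) vw by auto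
    have rQ: "r \<in> Q" using ext_in_Q[OF assms(1) that(1) sw(1) r(1)] .
    have "v2 \<in> lang \<Sigma> \<Delta> F r" using r f sw unfolding lang_def by blast
    then have rp: "r = p" using uniq[OF rQ that(2) _ that(6)] by blast
    show ?thesis
    proof (cases "w = []")
      case True then show ?thesis using r rp by simp
    next
      case False
      then have "u2 \<noteq> []" unfolding w_def by auto
      then have "p \<in> Qa" using that(7) by auto
      then show ?thesis using into_start[OF assms(1) noin _ that(1) sw(1)] r(1) rp by blast
    qed
  qed
  show "simple_nfa Q \<Sigma> (loop_delta \<Delta> Qa) Qa F"
    unfolding simple_nfa_def
  proof (intro conjI ballI impI)
    fix q assume q: "q \<in> Q"
    have "accessible \<Sigma> \<Delta> Qa q" using assms(2) q unfolding simple_nfa_def by blast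
    then obtain qa s where "qa \<in> Qa" "set s \<subseteq> \<Sigma>" "q \<in> ext_delta \<Delta> qa s"
      unfolding accessible_def by blast
    then show "accessible \<Sigma> (loop_delta \<Delta> Qa) Qa q"
      using ext_loop[of \<Delta> qa s Qa] unfolding accessible_def by blast
    have "lang \<Sigma> \<Delta> F q \<noteq> {}" using assms(2) q unfolding simple_nfa_def by blast
    then obtain s where "s \<in> lang \<Sigma> \<Delta> F q" by blast
    then have "s \<in> lang \<Sigma> (loop_delta \<Delta> Qa) F q"
      using ext_loop[of \<Delta> q s Qa] unfolding lang_def by blast
    then show "lang \<Sigma> (loop_delta \<Delta> Qa) F q \<noteq> {}" by blast
  next
    fix q p assume qp: "q \<in> Q" "p \<in> Q" "q \<noteq> p"
    show "lang \<Sigma> (loop_delta \<Delta> Qa) F q \<inter> lang \<Sigma> (loop_delta \<Delta> Qa) F p = {}"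
    proof (rule ccontr)
      assume "lang \<Sigma> (loop_delta \<Delta> Qa) F q \<inter> lang \<Sigma> (loop_delta \<Delta> Qa) F p \<noteq> {}"
      then obtain x where x: "x \<in> lang \<Sigma> (loop_delta \<Delta> Qa) F q" "x \<in> lang \<Sigma> (loop_delta \<Delta> Qa) F p" by blast
      obtain u1 v1 where 1: "x = u1 @ v1" "v1 \<in> lang \<Sigma> \<Delta> F q" "u1 = [] \<or> q \<in> Qa"
        using dec[OF qp(1) x(1)] by blast
      obtain u2 v2 where 2: "x = u2 @ v2" "v2 \<in> lang \<Sigma> \<Delta> F p" "u2 = [] \<or> p \<in> Qa"
        using dec[OF qp(2) x(2)] by blast
      show False
      proof (cases "length u1 \<le> length u2")
        case True then show False using key[OF qp(1,2) 1(1) 2(1) 1(2) 2(2) 2(3)] qp by blast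
      next
        case False then show False using key[OF qp(2,1) 2(1) 1(1) 2(2) 1(2) 1(3)] qp by simp
      qed
    qed
  qed
qed

end
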